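(* Let $\mathcal{G}$ be a network of type $\mathcal{C}^1$ with exactly two stubborn agents $s_1,s_2$, whose opinions evolve by the Friedkin–Johnsen model $\mathbf{x}(k+1)=(I-\beta)W\mathbf{x}(k)+\beta\mathbf{x}(0)$. Let $(a,b,d)$ be a permissible edge modification. Suppose there exists a global communicator $m$ of $\mathcal{G}$ such that, with the sets $\mathcal{T}_1,\dots,\mathcal{T}_4$ defined relative to $m$, the nodes $a$ and $d$ satisfy at least one of the following: (1) (equally neutral) $a\in\mathcal{T}_4$ and $d\in\mathcal{T}_4$; (2) (equally supportive) $a,d\in\mathcal{T}_1$ and every simple path from $m$ to $a$ and every simple path from $m$ to $d$ passes through $s_1$; or $a,d\in\mathcal{T}_2$ and every simple path from $m$ to $a$ and every simple path from $m$ to $d$ passes through $s_2$; (3) (equally connected) there is a node $c$ such that every simple path from $s_1$ or from $s_2$ to $a$ or to $d$ passes through $c$. Then $(a,b,d)$ is redundant, i.e. the influence centralities $c_{s_1}$ and $c_{s_2}$ are the same before and after the modification.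
   Context: Let $\mathcal{G}=(\mathcal{V},\mathcal{E})$, $\mathcal{V}=\{1,\dots,n\}$, be a directed graph, where an edge $(i,j)$ means information flows from $i$ to $j$. Its weighted adjacency matrix $W=[w_{ij}]$ is row-stochastic with $w_{ij}>0$ iff $(j,i)\in\mathcal{E}$ (self-loops allowed). In the Friedkin–Johnsen model, $\beta=\mathrm{diag}(\beta_1,\dots,\beta_n)$ with $\beta_i\in[0,1]$, and agent $i$ is stubborn if $\beta_i>0$. Here exactly two agents $s_1,s_2$ are stubborn, with $\beta_{s_1},\beta_{s_2}\in(0,1)$. The influence centrality vector is $\mathbf{c}=P^T\mathbb{1}_n/n$ with $P=(I_n-(I_n-\beta)W)^{-1}\beta$; $c_i$ is the influence centrality of agent $i$ (and $c_{s_1}+c_{s_2}=1$). Type $\mathcal{C}^1$: $\mathcal{G}$ is strongly connected and some node $m$ belongs to every cycle of $\mathcal{G}$ other than self-loops; such an $m$ is a global communicator. Given a global communicator $m$, a direct path from $i$ to $j$ is a path from $i$ to $j$ that does not pass through $m$. The nodes are classified as: $\mathcal{T}_1$: nodes having a direct path from $s_1$ but not from $s_2$; $\mathcal{T}_2$: direct path from $s_2$ but not from $s_1$; $\mathcal{T}_3$: direct paths from both; $\mathcal{T}_4$: from neither. By convention $s_1\in\mathcal{T}_1$, $s_2\in\mathcal{T}_2$, $m\in\mathcal{T}_3$, except that if $s_1$ has a direct path to $s_2$ then $s_2$ and every node with a direct path from $s_2$ belong to $\mathcal{T}_3$ (so $\mathcal{T}_2=\emptyset$). Edge modification $(a,b,d)$: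 for distinct nodes $a,b,d$ with $w_{bd}>0$ and some $0<w<w_{bd}$, replace $w_{ba}$ by $w_{ba}+w$ (adding edge $(a,b)$ if absent) and $w_{bd}$ by $w_{bd}-w$, so the in-degree (row sum) of $b$ is unchanged. It is permissible if the modified network is still of type $\mathcal{C}^1$. It is redundant if it changes the influence centrality of neither stubborn agent. *)

theory Defs
  imports "HOL-Analysis.Analysis"
begin

text \<open>Nodes are the elements of a finite type 'n (so n = CARD('n)).
  W is the weighted adjacency matrix; W $ i $ j > 0 iff (j,i) is an edge,
  i.e. information flows from j to i.\<close>

definition edge :: "real^'n^'n \<Rightarrow> 'n \<Rightarrow> 'n \<Rightarrow> bool" where
  "edge W i j \<longleftrightarrow> W $ j $ i > 0"

definition row_stochastic :: "real^'n^'n \<Rightarrow> bool" where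
  "row_stochastic W \<longleftrightarrow> (\<forall>i j. W $ i $ j \<ge> 0) \<and> (\<forall>i. (\<Sum>j\<in>UNIV. W $ i $ j) = 1)"

definition walk_edges :: "real^'n^'n \<Rightarrow> 'n list \<Rightarrow> bool" where
  "walk_edges W p \<longleftrightarrow> (\<forall>k. Suc k < length p \<longrightarrow> edge W (p ! k) (p ! Suc k))"

text \<open>Simple path (distinct vertices) from i to j; [i] is the trivial path.\<close>
definition simple_path :: "real^'n^'n \<Rightarrow> 'n list \<Rightarrow> 'n \<Rightarrow> 'n \<Rightarrow> bool" where
  "simple_path W p i j \<longleftrightarrow> p \<noteq> [] \<and> hd p = i \<and> last p = j \<and> distinct p \<and> walk_edges W p"

text \<open>Cycle other than a self-loop: a closed simple walk through at least two nodes.\<close>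
definition cycle :: "real^'n^'n \<Rightarrow> 'n list \<Rightarrow> bool" where
  "cycle W p \<longleftrightarrow> length p \<ge> 2 \<and> distinct p \<and> walk_edges W p \<and> edge W (last p) (hd p)"

definition strongly_connected :: "real^'n^'n \<Rightarrow> bool" where
  "strongly_connected W \<longleftrightarrow> (\<forall>i j. (i, j) \<in> {(u, v). edge W u v}\<^sup>*)"

definition global_communicator :: "real^'n^'n \<Rightarrow> 'n \<Rightarrow> bool" where
  "global_communicator W m \<longleftrightarrow> (\<forall>p. cycle W p \<longrightarrow> m \<in> set p)"

definition type_C1 :: "real^'n^'n \<Rightarrow> bool" where
  "type_C1 W \<longleftrightarrow> strongly_connected W \<and> (\<exists>m. global_communicator W m)"

definition direct_path :: "real^'n^'n \<Rightarrow> 'n \<Rightarrow> 'n \<Rightarrow> 'n \<Rightarrow> bool" where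
  "direct_path W m i j \<longleftrightarrow>
     (\<exists>p. simple_path W p i j \<and> length p \<ge> 2 \<and> m \<notin> set (butlast (tl p)))"

definition T_class :: "real^'n^'n \<Rightarrow> 'n \<Rightarrow> 'n \<Rightarrow> 'n \<Rightarrow> 'n \<Rightarrow> nat" where
  "T_class W m s1 s2 x =
    (let D1 = direct_path W m s1; D2 = direct_path W m s2; flag = D1 s2 in
     if x = m then 3
     else if x = s1 then 1
     else if x = s2 then (if flag then 3 else 2)
     else if flag \<and> D2 x then 3
     else if D1 x \<and> \<not> D2 x then 1
     else if D2 x \<and> \<not> D1 x then 2
     else if D1 x \<and> D2 x then 3
     else 4)"

definition diag_mat :: "real^'n \<Rightarrow> real^'n^'n" where
  "diag_mat v = (\<chi> i j. if i = j then v $ i else 0)"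

definition FJ_P :: "real^'n \<Rightarrow> real^'n^'n \<Rightarrow> real^'n^'n" where
  "FJ_P bv W = matrix_inv (mat 1 - (mat 1 - diag_mat bv) ** W) ** diag_mat bv"

definition influence_centrality :: "real^'n \<Rightarrow> real^'n^'n \<Rightarrow> 'n \<Rightarrow> real" where
  "influence_centrality bv W i = (\<Sum>j\<in>UNIV. FJ_P bv W $ j $ i) / real CARD('n)"

definition edge_mod :: "real^'n^'n \<Rightarrow> 'n \<Rightarrow> 'n \<Rightarrow> 'n \<Rightarrow> real \<Rightarrow> real^'n^'n" where
  "edge_mod W a b d w =
     (\<chi> i j. if i = b \<and> j = a then W $ b $ a + w
             else if i = b \<and> j = d then W $ b $ d - w
             else W $ i $ j)"

definition valid_edge_mod :: "real^'n^'n \<Rightarrow> 'n \<Rightarrow> 'n \<Rightarrow> 'n \<Rightarrow> real \<Rightarrow> bool" where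
  "valid_edge_mod W a b d w \<longleftrightarrow> a \<noteq> b \<and> b \<noteq> d \<and> a \<noteq> d \<and> W $ b $ d > 0 \<and> 0 < w \<and> w < W $ b $ d"

definition permissible :: "real^'n^'n \<Rightarrow> 'n \<Rightarrow> 'n \<Rightarrow> 'n \<Rightarrow> real \<Rightarrow> bool" where
  "permissible W a b d w \<longleftrightarrow> valid_edge_mod W a b d w \<and> type_C1 (edge_mod W a b d w)"

definition redundant :: "real^'n \<Rightarrow> real^'n^'n \<Rightarrow> 'n \<Rightarrow> 'n \<Rightarrow> 'n \<Rightarrow> 'n \<Rightarrow> 'n \<Rightarrow> real \<Rightarrow> bool" where
  "redundant bv W s1 s2 a b d w \<longleftrightarrow>
     influence_centrality bv (edge_mod W a b d w) s1 = influence_centrality bv W s1 \<and>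
     influence_centrality bv (edge_mod W a b d w) s2 = influence_centrality bv W s2"

definition all_paths_through :: "real^'n^'n \<Rightarrow> 'n \<Rightarrow> 'n \<Rightarrow> 'n \<Rightarrow> bool" where
  "all_paths_through W i j c \<longleftrightarrow> (\<forall>p. simple_path W p i j \<longrightarrow> c \<in> set p)"

end

theory Submission
  imports Defs "HOL-Library.Transitive_Closure_Table"
begin

lemma inv_props:
  assumes "invertible (A::real^'n^'n)"
  shows "A ** matrix_inv A = mat 1" "matrix_inv A ** A = mat 1"
  using someI_ex[OF assms[unfolded invertible_def]] unfolding matrix_inv_def by auto

lemma D_entry: "(mat 1 - diag_mat bv) $ i $ k = (if i = k then 1 - bv$i else (0::real))"
  by (simp add: diag_mat_def mat_def)

lemma DW_entry: "((mat 1 - diag_mat bv) ** W) $ i $ j = (1 - bv$i) * (W::real^'n^'n)$i$j"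
proof -
  have "((mat 1 - diag_mat bv) ** W) $ i $ j = (\<Sum>k\<in>UNIV. (if i = k then (1 - bv$i) * W$k$j else 0))"
    unfolding matrix_matrix_mult_def vec_lambda_beta
    by (intro sum.cong refl) (simp only: D_entry, simp)
  also have "... = (1 - bv$i) * W$i$j" by (simp add: sum.delta)
  finally show ?thesis .
qed

lemma M_entry:
  "(mat 1 - (mat 1 - diag_mat bv) ** W) $ i $ j = (if i = j then 1 else 0) - (1 - bv$i) * (W::real^'n^'n)$i$j"
  by (simp only: vector_minus_component DW_entry) (simp add: mat_def)

lemma mm_entry: "((A::real^'n^'n) ** B) $ i $ j = (\<Sum>k\<in>UNIV. A$i$k * B$k$j)"
  by (simp add: matrix_matrix_mult_def)

lemma M_mult_entry:
  "((mat 1 - (mat 1 - diag_mat bv) ** W) ** P) $ i $ j = P$i$j - (1 - bv$i) * (\<Sum>k\<in>UNIV. (W::real^'n^'n)$i$k * P$k$j)"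
proof -
  have "((mat 1 - (mat 1 - diag_mat bv) ** W) ** P) $ i $ j =
    (\<Sum>k\<in>UNIV. (if i = k then P$k$j else 0) - (1 - bv$i) * (W$i$k * P$k$j))"
    unfolding mm_entry[of "mat 1 - (mat 1 - diag_mat bv) ** W"]
    by (intro sum.cong refl) (simp only: M_entry, simp add: algebra_simps)
  also have "... = P$i$j - (1 - bv$i) * (\<Sum>k\<in>UNIV. W$i$k * P$k$j)"
    by (simp add: sum_subtractf sum_distrib_left sum.delta)
  finally show ?thesis .
qed

lemma M_vec_entry:
  "((mat 1 - (mat 1 - diag_mat bv) ** W) *v x) $ i = x$i - (1 - bv$i) * (\<Sum>k\<in>UNIV. (W::real^'n^'n)$i$k * x$k)"
proof -
  have "((mat 1 - (mat 1 - diag_mat bv) ** W) *v x) $ i =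
    (\<Sum>k\<in>UNIV. (if i = k then x$k else 0) - (1 - bv$i) * (W$i$k * x$k))"
    unfolding matrix_vector_mult_def vec_lambda_beta
    by (intro sum.cong refl) (simp only: M_entry, simp add: algebra_simps)
  also have "... = x$i - (1 - bv$i) * (\<Sum>k\<in>UNIV. W$i$k * x$k)"
    by (simp add: sum_subtractf sum_distrib_left sum.delta)
  finally show ?thesis .
qed

lemma T4_facts:
  assumes "T_class W m s1 s2 a = 4"
  shows "a \<noteq> m \<and> a \<noteq> s1 \<and> a \<noteq> s2 \<and> \<not> direct_path W m s1 a \<and> \<not> direct_path W m s2 a"
  using assms unfolding T_class_def Let_def by (auto split: if_splits)

lemma T1_facts:
  assumes "T_class W m s1 s2 a = 1"
  shows "a = s1 \<or> (a \<noteq> m \<and> a \<noteq> s2 \<and> \<not> direct_path W m s2 a)"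
  using assms unfolding T_class_def Let_def by (auto split: if_splits)

lemma T2_facts:
  assumes "T_class W m s1 s2 a = 2"
  shows "a = s2 \<or> (a \<noteq> m \<and> a \<noteq> s1 \<and> \<not> direct_path W m s1 a)"
  using assms unfolding T_class_def Let_def by (auto split: if_splits)

lemma avg:
  fixes W :: "real^'n^'n"
  assumes rs: "row_stochastic W" and h: "x$v = (\<Sum>k\<in>UNIV. W$v$k * x$k)"
    and le: "\<forall>k. W$v$k > 0 \<longrightarrow> x$k \<le> M" and eq: "x$v = M" and pos: "W$v$u > 0"
  shows "x$u = M"
proof -
  have "(\<Sum>k\<in>UNIV. W$v$k * (M - x$k)) = M * (\<Sum>k\<in>UNIV. W$v$k) - (\<Sum>k\<in>UNIV. W$v$k * x$k)"
    by (simp add: algebra_simps sum_subtractf sum_distrib_left)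
  also have "... = 0" using rs h eq by (simp add: row_stochastic_def)
  finally have z: "(\<Sum>k\<in>UNIV. W$v$k * (M - x$k)) = 0" .
  have nn: "\<forall>k\<in>UNIV. W$v$k * (M - x$k) \<ge> 0"
  proof
    fix k :: 'n
    have "W$v$k \<ge> 0" using rs by (simp add: row_stochastic_def)
    then show "W$v$k * (M - x$k) \<ge> 0"
      using le by (cases "W$v$k = 0") auto
  qed
  have "W$v$u * (M - x$u) = 0" using sum_nonneg_eq_0_iff[of UNIV "\<lambda>k. W$v$k * (M - x$k)"] nn z by simp
  then show ?thesis using pos by simp
qed

lemma closed_all:
  assumes sc: "strongly_connected W" and vS: "v \<in> S" and cl: "\<forall>v\<in>S. \<forall>u. edge W u v \<longrightarrow> u \<in> S"
  shows "u \<in> S"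
proof -
  have "(u, v) \<in> {(u,v). edge W u v}\<^sup>*" using sc unfolding strongly_connected_def by blast
  then show ?thesis
  proof (induction rule: converse_rtrancl_induct)
    case base then show ?case using vS .
  next
    case (step y z) then show ?case using cl by blast
  qed
qed

lemma M_invertible:
  fixes W :: "real^'n^'n"
  assumes rs: "row_stochastic W" and sc: "strongly_connected W"
    and br: "\<forall>i. 0 \<le> bv$i \<and> bv$i \<le> 1" and bs: "bv$s > 0"
  shows "invertible (mat 1 - (mat 1 - diag_mat bv) ** W)"
proof -
  have key: "\<forall>i. x$i \<le> 0" if hx: "\<forall>i. x$i = (1 - bv$i) * (\<Sum>k\<in>UNIV. W$i$k * x$k)" for x :: "real^'n"
  proof (rule ccontr)
    assume "\<not> (\<forall>i. x$i \<le> 0)"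
    then obtain i where xi: "x$i > 0" using not_le by blast
    define Mx where "Mx = Max (range (\<lambda>i. x$i))"
    have Mge: "x$k \<le> Mx" for k unfolding Mx_def by simp
    have Mpos: "Mx > 0" using Mge[of i] xi by linarith
    have "Mx \<in> range (\<lambda>i. x$i)" unfolding Mx_def by (rule Max_in) auto
    then obtain v where xv: "x$v = Mx" by auto
    have bz: "bv$v = 0 \<and> x$v = (\<Sum>k\<in>UNIV. W$v$k * x$k)" if xv: "x$v = Mx" for v
    proof -
      let ?s = "\<Sum>k\<in>UNIV. W$v$k * x$k"
      have "?s \<le> (\<Sum>k\<in>UNIV. W$v$k * Mx)"
        by (rule sum_mono, rule mult_left_mono) (use Mge rs in \<open>auto simp: row_stochastic_def\<close>)
      also have "... = Mx" using rs by (simp add: row_stochastic_def sum_distrib_right[symmetric])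
      finally have sle: "?s \<le> Mx" .
      have "bv$v = 0"
      proof (rule ccontr)
        assume "bv$v \<noteq> 0" hence bp: "bv$v > 0" using br by (metis order_le_less)
        have "(1 - bv$v) * ?s \<le> (1 - bv$v) * Mx" using sle br by (intro mult_left_mono) auto
        moreover have "(1 - bv$v) * Mx < Mx" using bp Mpos by (simp add: algebra_simps)
        moreover have "x$v = (1 - bv$v) * ?s" using hx by blast
        ultimately show False using xv by linarith
      qed
      moreover have "x$v = (1 - bv$v) * ?s" using hx by blast
      ultimately show ?thesis by simp
    qed
    have cl: "\<forall>v\<in>{v. x$v = Mx}. \<forall>u. edge W u v \<longrightarrow> u \<in> {v. x$v = Mx}"
    proof (intro ballI allI impI)
      fix v u assume "v \<in> {v. x$v = Mx}" "edge W u v"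
      then have xv: "x$v = Mx" and wp: "W$v$u > 0" by (auto simp: edge_def)
      have hv: "x$v = (\<Sum>k\<in>UNIV. W$v$k * x$k)" using bz[OF xv] by blast
      have le: "\<forall>k. W$v$k > 0 \<longrightarrow> x$k \<le> Mx" using Mge by blast
      have "x$u = Mx" by (rule avg[OF rs hv le xv wp])
      then show "u \<in> {v. x$v = Mx}" by simp
    qed
    have "s \<in> {v. x$v = Mx}" using closed_all[OF sc _ cl] xv by blast
    then have "x$s = Mx" by simp
    then have "bv$s = 0" using bz[of s] by blast
    then show False using bs by simp
  qed
  have "x = 0" if "(mat 1 - (mat 1 - diag_mat bv) ** W) *v x = 0" for x
  proof -
    have hx: "\<forall>i. x$i = (1 - bv$i) * (\<Sum>k\<in>UNIV. W$i$k * x$k)"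
    proof
      fix i
      have "((mat 1 - (mat 1 - diag_mat bv) ** W) *v x) $ i = 0" using that by simp
      then show "x$i = (1 - bv$i) * (\<Sum>k\<in>UNIV. W$i$k * x$k)" unfolding M_vec_entry by simp
    qed
    have hx': "\<forall>i. (-x)$i = (1 - bv$i) * (\<Sum>k\<in>UNIV. W$i$k * (-x)$k)"
    proof
      fix i
      have "x$i = (1 - bv$i) * (\<Sum>k\<in>UNIV. W$i$k * x$k)" using hx by blast
      then show "(-x)$i = (1 - bv$i) * (\<Sum>k\<in>UNIV. W$i$k * (-x)$k)" by (simp add: sum_negf)
    qed
    show ?thesis using key[OF hx] key[OF hx'] by (simp add: vec_eq_iff antisym)
  qed
  then show ?thesis
    unfolding invertible_left_inverse matrix_left_invertible_ker by blast
qed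

lemma simple_path_drop:
  assumes "simple_path W p s t" "i < length p"
  shows "simple_path W (drop i p) (p!i) t"
  using assms unfolding simple_path_def walk_edges_def
  by (auto simp: hd_drop_conv_nth last_drop)

lemma through_m:
  assumes sa: "s \<noteq> a" and nd: "m \<noteq> s \<Longrightarrow> \<not> direct_path W m s a"
    and ma: "all_paths_through W m a c"
  shows "all_paths_through W s a c"
  unfolding all_paths_through_def
proof (intro allI impI)
  fix p assume p: "simple_path W p s a"
  have "m \<in> set p"
  proof (cases "m = s")
    case True then show ?thesis using p by (auto simp: simple_path_def)
  next
    case False
    have "length p \<ge> 2"
    proof (rule ccontr)
      assume "\<not> length p \<ge> 2"
      then have l: "length p < 2" by simp
      have "p \<noteq> []" using p by (simp add: simple_path_def)
      then obtain z zs where pz: "p = z # zs" by (cases p) auto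
      with l have "zs = []" by simp
      with pz have "p = [z]" by simp
      then show False using p sa unfolding simple_path_def by force
    qed
    then have "m \<in> set (butlast (tl p))" using nd[OF False] p unfolding direct_path_def by blast
    then have "m \<in> set (tl p)" by (rule in_set_butlastD)
    then show ?thesis by (cases p) auto
  qed
  then obtain i where i: "i < length p" "p!i = m" by (auto simp: in_set_conv_nth)
  have "simple_path W (drop i p) m a" using simple_path_drop[OF p i(1)] i(2) by simp
  then have "c \<in> set (drop i p)" using ma unfolding all_paths_through_def by blast
  then show "c \<in> set p" using set_drop_subset by fast
qed


lemma cut:
  fixes W :: "real^'n^'n" and x :: "real^'n"
  assumes rs: "row_stochastic W" and sc: "strongly_connected W"
    and harm: "\<forall>v. v \<noteq> s1 \<and> v \<noteq> s2 \<longrightarrow> x$v = (\<Sum>k\<in>UNIV. W$v$k * x$k)"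
    and p1: "all_paths_through W s1 t c" and p2: "all_paths_through W s2 t c"
  shows "x$t = x$c"
proof (cases "t = c")
  case True then show ?thesis by simp
next
  case tc: False
  define R where "R = (\<lambda>u v. edge W u v \<and> u \<noteq> c \<and> v \<noteq> c)"
  define A where "A = {v. R\<^sup>*\<^sup>* v t}"
  have tA: "t \<in> A" unfolding A_def by simp
  have cA: "c \<notin> A"
  proof
    assume "c \<in> A"
    then have "R\<^sup>*\<^sup>* c t" by (simp add: A_def)
    then show False
    proof (cases rule: converse_rtranclpE)
      case base then show False using tc by simp
    next
      case (step y) then show False by (simp add: R_def)
    qed
  qed
  have noS: "s \<notin> A" if sp: "all_paths_through W s t c" for s
  proof
    assume sA: "s \<in> A"
    then have sc': "s \<noteq> c" using cA by auto
    from sA have "R\<^sup>*\<^sup>* s t" by (simp add: A_def)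
    then obtain xs where "rtrancl_path R s xs t" by (auto simp: rtranclp_eq_rtrancl_path)
    then obtain ys where ys: "rtrancl_path R s ys t" "distinct (s # ys)"
      by (rule rtrancl_path_distinct)
    have last: "last (s # ys) = t"
    proof (cases "ys = []")
      case True then show ?thesis using ys(1) by (auto elim: rtrancl_path.cases)
    next
      case False then show ?thesis using rtrancl_path_last[OF ys(1)] by simp
    qed
    have we: "walk_edges W (s # ys)"
      unfolding walk_edges_def
    proof (intro allI impI)
      fix k assume "Suc k < length (s # ys)"
      then have "k < length ys" by simp
      from rtrancl_path_nth[OF ys(1) this] show "edge W ((s # ys) ! k) ((s # ys) ! Suc k)"
        by (simp add: R_def)
    qed
    have "simple_path W (s # ys) s t" unfolding simple_path_def using last ys(2) we by simp
    then have "c \<in> set (s # ys)" using sp unfolding all_paths_through_def by blast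
    moreover have "c \<notin> set ys"
    proof
      assume "c \<in> set ys"
      from rtrancl_path_Range[OF ys(1) this] show False by (auto simp: R_def)
    qed
    ultimately show False using sc' by simp
  qed
  have s1A: "s1 \<notin> A" using noS[OF p1] .
  have s2A: "s2 \<notin> A" using noS[OF p2] .
  have clA: "u \<in> A" if "v \<in> A" "edge W u v" "u \<noteq> c" for u v
  proof -
    have "v \<noteq> c" using that(1) cA by auto
    then have "R u v" using that by (simp add: R_def)
    moreover have "R\<^sup>*\<^sup>* v t" using that(1) by (simp add: A_def)
    ultimately show ?thesis unfolding A_def by (simp add: converse_rtranclp_into_rtranclp)
  qed
  have bound: "\<forall>v\<in>A. y$v \<le> y$c"
    if hy: "\<forall>v\<in>A. y$v = (\<Sum>k\<in>UNIV. W$v$k * y$k)" for y :: "real^'n"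
  proof (rule ccontr)
    assume "\<not> (\<forall>v\<in>A. y$v \<le> y$c)"
    then obtain v0 where v0: "v0 \<in> A" "y$v0 > y$c" using not_le by blast
    define Mx where "Mx = Max ((\<lambda>i. y$i) ` A)"
    have fin: "finite ((\<lambda>i. y$i) ` A)" by simp
    have Mge: "y$k \<le> Mx" if "k \<in> A" for k unfolding Mx_def using fin that by simp
    have Mc: "y$c < Mx" using Mge[OF v0(1)] v0(2) by linarith
    have "Mx \<in> (\<lambda>i. y$i) ` A" unfolding Mx_def using v0(1) by (intro Max_in) auto
    then obtain v where v: "v \<in> A" "y$v = Mx" by auto
    let ?S = "{v\<in>A. y$v = Mx}"
    have cl: "\<forall>v\<in>?S. \<forall>u. edge W u v \<longrightarrow> u \<in> ?S"
    proof (intro ballI allI impI)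
      fix v u assume vS: "v \<in> ?S" and e: "edge W u v"
      have le: "\<forall>k. W$v$k > 0 \<longrightarrow> y$k \<le> Mx"
      proof (intro allI impI)
        fix k assume "W$v$k > 0"
        then have "edge W k v" by (simp add: edge_def)
        then have "k \<in> A \<or> k = c" using clA[of v k] vS by auto
        then show "y$k \<le> Mx" using Mge Mc by auto
      qed
      have hv: "y$v = (\<Sum>k\<in>UNIV. W$v$k * y$k)" using hy vS by auto
      have yv: "y$v = Mx" using vS by auto
      have wp: "W$v$u > 0" using e by (simp add: edge_def)
      have "y$u = Mx" by (rule avg[OF rs hv le yv wp])
      then have "u \<noteq> c" using Mc by auto
      then have "u \<in> A" using clA[of v u] vS e by auto
      then show "u \<in> ?S" using \<open>y$u = Mx\<close> by simp
    qed
    have "c \<in> ?S" using closed_all[OF sc _ cl] v by blast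
    then show False using cA by simp
  qed
  have hx: "\<forall>v\<in>A. x$v = (\<Sum>k\<in>UNIV. W$v$k * x$k)"
  proof
    fix v assume "v \<in> A"
    then have "v \<noteq> s1 \<and> v \<noteq> s2" using s1A s2A by blast
    then show "x$v = (\<Sum>k\<in>UNIV. W$v$k * x$k)" using harm by blast
  qed
  have hx': "\<forall>v\<in>A. (-x)$v = (\<Sum>k\<in>UNIV. W$v$k * (-x)$k)"
  proof
    fix v assume "v \<in> A"
    then have "x$v = (\<Sum>k\<in>UNIV. W$v$k * x$k)" using hx by blast
    then show "(-x)$v = (\<Sum>k\<in>UNIV. W$v$k * (-x)$k)" by (simp add: sum_negf)
  qed
  have "x$t \<le> x$c" using bound[OF hx] tA by blast
  moreover have "(-x)$t \<le> (-x)$c" using bound[OF hx'] tA by blast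
  ultimately show ?thesis by simp
qed


lemma edge_mod_row:
  assumes "a \<noteq> d"
  shows "edge_mod W a b d w $ b $ k = W$b$k + (if k = a then w else 0) - (if k = d then w else 0)"
  using assms by (simp add: edge_mod_def)

lemma edge_mod_other:
  assumes "i \<noteq> b"
  shows "edge_mod W a b d w $ i $ k = W$i$k"
  using assms by (simp add: edge_mod_def)

theorem theorem1:
  fixes W :: "real^'n^'n" and bv :: "real^'n" and s1 s2 a b d :: 'n and w :: real
  assumes rs: "row_stochastic W"
    and C1: "type_C1 W"
    and beta_range: "\<forall>i. 0 \<le> bv $ i \<and> bv $ i \<le> 1"
    and s_dist: "s1 \<noteq> s2"
    and beta_s1: "0 < bv $ s1 \<and> bv $ s1 < 1"
    and beta_s2: "0 < bv $ s2 \<and> bv $ s2 < 1"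
    and only_two: "\<forall>i. i \<noteq> s1 \<and> i \<noteq> s2 \<longrightarrow> bv $ i = 0"
    and perm: "permissible W a b d w"
    and cond: "\<exists>m. global_communicator W m \<and>
       ( (T_class W m s1 s2 a = 4 \<and> T_class W m s1 s2 d = 4)
       \<or> (T_class W m s1 s2 a = 1 \<and> T_class W m s1 s2 d = 1 \<and>
           all_paths_through W m a s1 \<and> all_paths_through W m d s1)
       \<or> (T_class W m s1 s2 a = 2 \<and> T_class W m s1 s2 d = 2 \<and>
           all_paths_through W m a s2 \<and> all_paths_through W m d s2)
       \<or> (\<exists>c. \<forall>s\<in>{s1, s2}. \<forall>t\<in>{a, d}. all_paths_through W s t c))"
  shows "redundant bv W s1 s2 a b d w"
proof -
  have triv_hd: "all_paths_through W s t s" for s t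
    unfolding all_paths_through_def simple_path_def by (auto intro: list.set_sel(1))
  have triv_last: "all_paths_through W s t t" for s t
    unfolding all_paths_through_def simple_path_def by (auto intro: last_in_set)
  obtain c where cpaths: "\<forall>s\<in>{s1, s2}. \<forall>t\<in>{a, d}. all_paths_through W s t c"
  proof -
    from cond obtain m where m: "global_communicator W m" and
      cs: "(T_class W m s1 s2 a = 4 \<and> T_class W m s1 s2 d = 4)
       \<or> (T_class W m s1 s2 a = 1 \<and> T_class W m s1 s2 d = 1 \<and>
           all_paths_through W m a s1 \<and> all_paths_through W m d s1)
       \<or> (T_class W m s1 s2 a = 2 \<and> T_class W m s1 s2 d = 2 \<and>
           all_paths_through W m a s2 \<and> all_paths_through W m d s2)
       \<or> (\<exists>c. \<forall>s\<in>{s1, s2}. \<forall>t\<in>{a, d}. all_paths_through W s t c)" by blast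
    have T4: "all_paths_through W s t m" if "T_class W m s1 s2 t = 4" "s \<in> {s1, s2}" for s t
    proof -
      from T4_facts[OF that(1)] that(2) have "s \<noteq> t" "\<not> direct_path W m s t" by auto
      then show ?thesis by (intro through_m[of s t m W m] triv_hd) auto
    qed
    have T1: "all_paths_through W s t s1"
      if "T_class W m s1 s2 t = 1" "all_paths_through W m t s1" "s \<in> {s1, s2}" for s t
    proof (cases "t = s1")
      case True then show ?thesis using triv_last by simp
    next
      case False
      with T1_facts[OF that(1)] have "t \<noteq> s2" "\<not> direct_path W m s2 t" by auto
      then have "all_paths_through W s2 t s1" by (intro through_m[of s2 t m W s1] that(2)) auto
      then show ?thesis using that(3) triv_hd by auto
    qed
    have T2: "all_paths_through W s t s2"
      if "T_class W m s1 s2 t = 2" "all_paths_through W m t s2" "s \<in> {s1, s2}" for s t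
    proof (cases "t = s2")
      case True then show ?thesis using triv_last by simp
    next
      case False
      with T2_facts[OF that(1)] have "t \<noteq> s1" "\<not> direct_path W m s1 t" by auto
      then have "all_paths_through W s1 t s2" by (intro through_m[of s1 t m W s2] that(2)) auto
      then show ?thesis using that(3) triv_hd by auto
    qed
    from cs show thesis
    proof (elim disjE conjE)
      assume "T_class W m s1 s2 a = 4" "T_class W m s1 s2 d = 4"
      then show thesis using that[of m] T4 by blast
    next
      assume "T_class W m s1 s2 a = 1" "T_class W m s1 s2 d = 1"
        "all_paths_through W m a s1" "all_paths_through W m d s1"
      then show thesis using that[of s1] T1 by blast
    next
      assume "T_class W m s1 s2 a = 2" "T_class W m s1 s2 d = 2"
        "all_paths_through W m a s2" "all_paths_through W m d s2"
      then show thesis using that[of s2] T2 by blast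
    next
      assume "\<exists>c. \<forall>s\<in>{s1, s2}. \<forall>t\<in>{a, d}. all_paths_through W s t c"
      then show thesis using that by blast
    qed
  qed
  define W' where "W' = edge_mod W a b d w"
  have vm: "valid_edge_mod W a b d w" and C1': "type_C1 W'"
    using perm unfolding permissible_def W'_def by auto
  have ad: "a \<noteq> d" and wpos: "0 < w" and wlt: "w < W$b$d" using vm by (auto simp: valid_edge_mod_def)
  have rowb: "W'$b$k = W$b$k + (if k = a then w else 0) - (if k = d then w else 0)" for k
    unfolding W'_def by (rule edge_mod_row[OF ad])
  have rowo: "i \<noteq> b \<Longrightarrow> W'$i$k = W$i$k" for i k
    unfolding W'_def by (rule edge_mod_other)
  have rs': "row_stochastic W'"
    unfolding row_stochastic_def
  proof (intro conjI allI)
    fix i j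
    show "0 \<le> W'$i$j"
    proof (cases "i = b")
      case True
      have "0 \<le> W$b$j" using rs by (simp add: row_stochastic_def)
      then show ?thesis using True rowb[of j] wpos wlt ad by auto
    next
      case False then show ?thesis using rowo rs by (simp add: row_stochastic_def)
    qed
  next
    fix i
    show "(\<Sum>j\<in>UNIV. W'$i$j) = 1"
    proof (cases "i = b")
      case True
      have "(\<Sum>j\<in>UNIV. W'$b$j) = (\<Sum>j\<in>UNIV. W$b$j) + w - w"
        unfolding rowb by (simp add: sum.distrib sum_subtractf)
      then show ?thesis using True rs by (simp add: row_stochastic_def)
    next
      case False then show ?thesis using rowo rs by (simp add: row_stochastic_def)
    qed
  qed
  have sc: "strongly_connected W" using C1 by (simp add: type_C1_def)
  have sc': "strongly_connected W'" using C1' by (simp add: type_C1_def)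
  define M where "M = mat 1 - (mat 1 - diag_mat bv) ** W"
  define M' where "M' = mat 1 - (mat 1 - diag_mat bv) ** W'"
  have invM: "invertible M" unfolding M_def
    using M_invertible[OF rs sc beta_range, of s1] beta_s1 by blast
  have invM': "invertible M'" unfolding M'_def
    using M_invertible[OF rs' sc' beta_range, of s1] beta_s1 by blast
  define P where "P = FJ_P bv W"
  have PM: "P = matrix_inv M ** diag_mat bv" unfolding P_def FJ_P_def M_def ..
  have MP: "M ** P = diag_mat bv"
    unfolding PM matrix_mul_assoc inv_props(1)[OF invM] by simp
  have harm: "\<forall>v. v \<noteq> s1 \<and> v \<noteq> s2 \<longrightarrow> (\<chi> i. P$i$j)$v = (\<Sum>k\<in>UNIV. W$v$k * (\<chi> i. P$i$j)$k)" for j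
  proof (intro allI impI)
    fix v assume "v \<noteq> s1 \<and> v \<noteq> s2"
    then have bz: "bv$v = 0" using only_two by blast
    have "(M ** P)$v$j = diag_mat bv $ v $ j" using MP by simp
    then show "(\<chi> i. P$i$j)$v = (\<Sum>k\<in>UNIV. W$v$k * (\<chi> i. P$i$j)$k)"
      unfolding M_def M_mult_entry using bz by (simp add: diag_mat_def split: if_splits)
  qed
  have Pad: "P$a$j = P$d$j" for j
  proof -
    have c1: "all_paths_through W s1 a c" "all_paths_through W s2 a c"
      "all_paths_through W s1 d c" "all_paths_through W s2 d c" using cpaths by auto
    have "(\<chi> i. P$i$j)$a = (\<chi> i. P$i$j)$c"
      by (rule cut[OF rs sc harm c1(1) c1(2)])
    moreover have "(\<chi> i. P$i$j)$d = (\<chi> i. P$i$j)$c"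
      by (rule cut[OF rs sc harm c1(3) c1(4)])
    ultimately show ?thesis by simp
  qed
  have M'P: "M' ** P = diag_mat bv"
  proof -
    have "(M' ** P)$i$j = (M ** P)$i$j" for i j
    proof -
      have "(\<Sum>k\<in>UNIV. W'$i$k * P$k$j) = (\<Sum>k\<in>UNIV. W$i$k * P$k$j)"
      proof (cases "i = b")
        case True
        have "(\<Sum>k\<in>UNIV. W'$i$k * P$k$j) =
          (\<Sum>k\<in>UNIV. W$b$k * P$k$j + (if k = a then w * P$k$j else 0) - (if k = d then w * P$k$j else 0))"
          using True by (intro sum.cong refl) (simp add: rowb algebra_simps)
        also have "... = (\<Sum>k\<in>UNIV. W$b$k * P$k$j) + w * P$a$j - w * P$d$j"
          by (simp add: sum.distrib sum_subtractf)
        finally show ?thesis using True Pad by simp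
      next
        case False then show ?thesis using rowo by simp
      qed
      then show ?thesis unfolding M_def M'_def M_mult_entry by simp
    qed
    then show ?thesis using MP by (simp add: vec_eq_iff)
  qed
  have "FJ_P bv W' = P"
  proof -
    have "FJ_P bv W' = matrix_inv M' ** (M' ** P)" unfolding FJ_P_def M'_def[symmetric] M'P ..
    also have "... = P" unfolding matrix_mul_assoc inv_props(2)[OF invM'] by simp
    finally show ?thesis .
  qed
  then show ?thesis unfolding redundant_def influence_centrality_def W'_def P_def by simp
qed

end
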